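(* Let $n\ge0$ and $\boldsymbol\mu\in\mathcal{P}(\Phi)$, and suppose $k=\|\boldsymbol\mu\|+\ell(\boldsymbol\mu^e)\le n$. Then the centralizer $\mathcal A_{\boldsymbol\mu^{\uparrow n}}$ of $J_{\boldsymbol\mu^{\uparrow n}}$ in $G_n$ is $$\mathcal A_{\boldsymbol\mu^{\uparrow n}}=\left\{\begin{bmatrix}A&B\\C&D\end{bmatrix}\ \middle|\ A\in\mathcal A_{\boldsymbol\mu^{\uparrow k}},\ D\in G_{n-k},\ J_{\boldsymbol\mu^{\uparrow k}}B=B,\ CJ_{\boldsymbol\mu^{\uparrow k}}=C\right\},$$ where the block decomposition is of size $(k\,|\,n-k)$ and $\mathcal A_{\boldsymbol\mu^{\uparrow k}}$ is the centralizer of $J_{\boldsymbol\mu^{\uparrow k}}$ in $G_k$.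
   Context: $q$ is a prime power, $G_n=GL_n(\mathbb F_q)$. $\Phi$ is the set of monic irreducible polynomials in $\mathbb F_q[t]$ other than $t$, $d(f)$ the degree of $f$; $\mathcal{P}(\Phi)$ is the set of finitely supported maps $\boldsymbol\lambda$ from $\Phi$ to partitions, $\|\boldsymbol\lambda\|=\sum_f d(f)|\boldsymbol\lambda(f)|$, $\boldsymbol\lambda^e=\boldsymbol\lambda(t-1)$, $\ell$ = number of nonzero parts. For $f=t^d-\sum_{i=1}^d a_it^{i-1}\in\Phi$, $J(f)$ is the $d\times d$ companion matrix with $1$'s on the superdiagonal, last row $(a_1,\dots,a_d)$ and zeros elsewhere; $J_m(f)$ is the $dm\times dm$ block upper triangular matrix with $m$ diagonal blocks $J(f)$, blocks $I_d$ on the block superdiagonal, and zeros elsewhere. For $\boldsymbol\lambda\in\mathcal{P}(\Phi)$, $J_{\boldsymbol\lambda}$ is the block diagonal matrix with blocks $J_{\boldsymbol\lambda_i(f)}(f)$ over all $f$ and $i$, arranged with the blocks for $f\ne t-1$ first and then the blocks for $f=t-1$ in nonincreasing order of part size. For $\boldsymbol\mu\in\mathcal{P}(\Phi)$ with $r=\ell(\boldsymbol\mu^e)$ and $n\ge\|\boldsymbol\mu\|+r$, define $\boldsymbol\mu^{\uparrow n}\in\mathcal{P}(\Phi)$ by $\boldsymbol\mu^{\uparrow n}(f)=\boldsymbol\mu(f)$ for $f\ne t-1$ and $\boldsymbol\mu^{\uparrow n}(t-1)=(\boldsymbol\mu^e_1+1,\dots,\boldsymbol\mu^e_r+1,1,\dots,1)$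 with $n-r-\|\boldsymbol\mu\|$ trailing ones; then $J_{\boldsymbol\mu^{\uparrow n}}\in G_n$. *)

theory Defs
  imports "Jordan_Normal_Form.Matrix" "HOL-Computational_Algebra.Polynomial"
    "HOL-Computational_Algebra.Polynomial_Factorial"
begin

text \<open>The field F_q is modelled by an arbitrary finite field type 'a.\<close>

definition Phi :: "'a::{field,finite} poly set" where
  "Phi = {f. lead_coeff f = 1 \<and> irreducible f \<and> f \<noteq> [:0, 1:]}"

abbreviation tm1 :: "'a::{field,finite} poly" where
  "tm1 \<equiv> [:-1, 1:]"

definition is_partition :: "nat list \<Rightarrow> bool" where
  "is_partition xs \<longleftrightarrow> sorted_wrt (\<ge>) xs \<and> 0 \<notin> set xs"

definition supp :: "('a::{field,finite} poly \<Rightarrow> nat list) \<Rightarrow> 'a poly set" where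
  "supp lam = {f. lam f \<noteq> []}"

definition PPhi :: "('a::{field,finite} poly \<Rightarrow> nat list) set" where
  "PPhi = {lam. finite (supp lam) \<and> supp lam \<subseteq> Phi \<and> (\<forall>f. is_partition (lam f))}"

definition pnorm :: "('a::{field,finite} poly \<Rightarrow> nat list) \<Rightarrow> nat" where
  "pnorm lam = (\<Sum>f\<in>supp lam. degree f * sum_list (lam f))"

text \<open>Companion matrix J(f), f = t^d - sum a_i t^(i-1), so a_i = - coeff f (i-1).\<close>
definition companion :: "'a::{field,finite} poly \<Rightarrow> 'a mat" where
  "companion f = (let d = degree f in
     mat d d (\<lambda>(i,j). if i + 1 = d then - coeff f j else if j = i + 1 then 1 else 0))"

definition jblock :: "'a::{field,finite} poly \<Rightarrow> nat \<Rightarrow> 'a mat" where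
  "jblock f m = (let d = degree f in
     mat (d*m) (d*m) (\<lambda>(i,j).
       if i div d = j div d then companion f $$ (i mod d, j mod d)
       else if j div d = i div d + 1 then (if i mod d = j mod d then 1 else 0)
       else 0))"

definition nonunip_list :: "('a::{field,finite} poly \<Rightarrow> nat list) \<Rightarrow> 'a poly list" where
  "nonunip_list lam = (SOME xs. distinct xs \<and> set xs = supp lam - {tm1})"

definition Jmat :: "('a::{field,finite} poly \<Rightarrow> nat list) \<Rightarrow> 'a mat" where
  "Jmat lam = diag_block_mat
     (concat (map (\<lambda>f. map (jblock f) (lam f)) (nonunip_list lam))
      @ map (jblock tm1) (rev (sort (lam tm1))))"

definition up :: "nat \<Rightarrow> ('a::{field,finite} poly \<Rightarrow> nat list) \<Rightarrow> ('a poly \<Rightarrow> nat list)" where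
  "up n mu = mu(tm1 := map Suc (mu tm1) @ replicate (n - length (mu tm1) - pnorm mu) 1)"

definition GL :: "nat \<Rightarrow> 'a::{field,finite} mat set" where
  "GL n = {A. A \<in> carrier_mat n n \<and> invertible_mat A}"

definition centralizer :: "nat \<Rightarrow> 'a::{field,finite} mat \<Rightarrow> 'a mat set" where
  "centralizer n M = {A \<in> GL n. A * M = M * A}"

end

theory Submission
  imports Defs "Jordan_Normal_Form.Determinant"
begin

lemma inv_det:
  fixes A :: "'a::field mat"
  assumes A: "A \<in> carrier_mat n n"
  shows "invertible_mat A \<longleftrightarrow> det A \<noteq> 0"
proof
  assume "invertible_mat A"
  then obtain B where AB: "A * B = 1\<^sub>m n" and BA: "B * A = 1\<^sub>m (dim_row B)"
    using A unfolding invertible_mat_def inverts_mat_def by auto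
  have "dim_col B = n" using AB by (metis index_mult_mat(3) index_one_mat(3))
  moreover have "dim_row B = n" using BA A by (metis index_mult_mat(3) index_one_mat(3) carrier_matD(2))
  ultimately have B: "B \<in> carrier_mat n n" by auto
  have "det A * det B = 1" using det_mult[OF A B] AB by simp
  then show "det A \<noteq> 0" by auto
next
  assume "det A \<noteq> 0"
  from det_non_zero_imp_unit[OF A this, of "()"]
  obtain B where B: "B \<in> carrier_mat n n" and "B * A = 1\<^sub>m n" "A * B = 1\<^sub>m n"
    unfolding Units_def ring_mat_def by auto
  then show "invertible_mat A" using A B unfolding invertible_mat_def inverts_mat_def
    by (auto intro!: exI[of _ B])
qed

lemma GL_det: "GL n = {A. A \<in> carrier_mat n n \<and> det A \<noteq> 0}"
  unfolding GL_def using inv_det by blast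

lemma key_CB:
  fixes J :: "'a::field mat"
  assumes J: "J \<in> carrier_mat k k" and Q: "Q \<in> carrier_mat k k" and R: "R \<in> carrier_mat k k"
    and QR: "(J - 1\<^sub>m k) * Q + R * (J - 1\<^sub>m k) = 1\<^sub>m k"
    and C: "C \<in> carrier_mat m k" and B: "B \<in> carrier_mat k m'"
    and CJ: "C * J = C" and JB: "J * B = B"
  shows "C * B = 0\<^sub>m m m'"
proof -
  define N where "N = J - 1\<^sub>m k"
  have N: "N \<in> carrier_mat k k" using J unfolding N_def by auto
  have CN: "C * N = 0\<^sub>m m k" unfolding N_def using C J CJ
    by (simp add: mult_minus_distrib_mat[OF C J one_carrier_mat])
  have NB: "N * B = 0\<^sub>m k m'" unfolding N_def using B J JB
    by (simp add: minus_mult_distrib_mat[OF J one_carrier_mat B])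
  have "C * B = C * ((N * Q + R * N) * B)" using QR B unfolding N_def by simp
  also have "\<dots> = C * (N * (Q * B)) + C * (R * (N * B))"
    using N Q R B C
    by (subst add_mult_distrib_mat[of _ k k], auto, subst mult_add_distrib_mat[OF C], auto)
  also have "\<dots> = (C * N) * (Q * B) + (C * R) * (N * B)"
    using assoc_mult_mat[OF C N mult_carrier_mat[OF Q B]] assoc_mult_mat[OF C R mult_carrier_mat[OF N B]] by simp
  also have "\<dots> = 0\<^sub>m m m'" using CN NB Q B C R by simp
  finally show ?thesis .
qed

lemma four_block_eq:
  assumes A: "A \<in> carrier_mat nr1 nc1" "A' \<in> carrier_mat nr1 nc1"
    and B: "B \<in> carrier_mat nr1 nc2" "B' \<in> carrier_mat nr1 nc2"
    and C: "C \<in> carrier_mat nr2 nc1" "C' \<in> carrier_mat nr2 nc1"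
    and D: "D \<in> carrier_mat nr2 nc2" "D' \<in> carrier_mat nr2 nc2"
    and eq: "four_block_mat A B C D = four_block_mat A' B' C' D'"
  shows "A = A' \<and> B = B' \<and> C = C' \<and> D = D'"
proof (intro conjI)
  have e: "\<And>i j. four_block_mat A B C D $$ (i,j) = four_block_mat A' B' C' D' $$ (i,j)"
    using eq by simp
  show "A = A'"
  proof (rule eq_matI)
    fix i j assume "i < dim_row A'" "j < dim_col A'"
    then show "A $$ (i,j) = A' $$ (i,j)" using e[of i j] A B C D by auto
  qed (use A in auto)
  show "B = B'"
  proof (rule eq_matI)
    fix i j assume "i < dim_row B'" "j < dim_col B'"
    then show "B $$ (i,j) = B' $$ (i,j)" using e[of i "j + nc1"] A B C D by auto
  qed (use B in auto)
  show "C = C'"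
  proof (rule eq_matI)
    fix i j assume "i < dim_row C'" "j < dim_col C'"
    then show "C $$ (i,j) = C' $$ (i,j)" using e[of "i + nr1" j] A B C D by auto
  qed (use C in auto)
  show "D = D'"
  proof (rule eq_matI)
    fix i j assume "i < dim_row D'" "j < dim_col D'"
    then show "D $$ (i,j) = D' $$ (i,j)" using e[of "i + nr1" "j + nc1"] A B C D by auto
  qed (use D in auto)
qed

lemma commute_block:
  fixes Jk :: "'a::field mat"
  assumes Jk: "Jk \<in> carrier_mat k k"
    and A: "A \<in> carrier_mat k k" and B: "B \<in> carrier_mat k m"
    and C: "C \<in> carrier_mat m k" and D: "D \<in> carrier_mat m m"
  shows "four_block_mat A B C D * four_block_mat Jk (0\<^sub>m k m) (0\<^sub>m m k) (1\<^sub>m m) =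
         four_block_mat Jk (0\<^sub>m k m) (0\<^sub>m m k) (1\<^sub>m m) * four_block_mat A B C D
    \<longleftrightarrow> A * Jk = Jk * A \<and> Jk * B = B \<and> C * Jk = C"
proof -
  have 1: "four_block_mat A B C D * four_block_mat Jk (0\<^sub>m k m) (0\<^sub>m m k) (1\<^sub>m m)
     = four_block_mat (A * Jk) B (C * Jk) D"
    by (subst mult_four_block_mat[OF A B C D Jk], insert A B C D Jk, auto)
  have 2: "four_block_mat Jk (0\<^sub>m k m) (0\<^sub>m m k) (1\<^sub>m m) * four_block_mat A B C D
     = four_block_mat (Jk * A) (Jk * B) C D"
    by (subst mult_four_block_mat[OF Jk _ _ _ A B C D], insert A B C D Jk, auto)
  show ?thesis unfolding 1 2
  proof
    assume "four_block_mat (A * Jk) B (C * Jk) D = four_block_mat (Jk * A) (Jk * B) C D"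
    from four_block_eq[of _ k k _ _ m _ _ m, OF _ _ _ _ _ _ _ _ this] A B C D Jk
    show "A * Jk = Jk * A \<and> Jk * B = B \<and> C * Jk = C" by auto
  qed auto
qed

lemma unit_inv:
  fixes X :: "'a::field mat"
  assumes X: "X \<in> carrier_mat n n" and d: "det X \<noteq> 0"
  obtains Y where "Y \<in> carrier_mat n n" "X * Y = 1\<^sub>m n" "Y * X = 1\<^sub>m n"
proof -
  from det_non_zero_imp_unit[OF X d, of "()"]
  show ?thesis using that unfolding Units_def ring_mat_def by auto
qed

lemma one_minus_nil:
  fixes E :: "'a::field mat"
  assumes E: "E \<in> carrier_mat k k" and EE: "E * E = 0\<^sub>m k k"
  shows "det (1\<^sub>m k - E) \<noteq> 0"
proof -
  have "(1\<^sub>m k - E) * (1\<^sub>m k + E) = (1\<^sub>m k - E) * 1\<^sub>m k + (1\<^sub>m k - E) * E"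
    using E by (subst mult_add_distrib_mat[of _ k k], auto)
  also have "\<dots> = (1\<^sub>m k - E) + (E - E * E)"
    using E by (subst minus_mult_distrib_mat[of _ k k], auto)
  also have "\<dots> = 1\<^sub>m k" unfolding EE using E by (intro eq_matI, auto)
  moreover have c1: "1\<^sub>m k - E \<in> carrier_mat k k" "1\<^sub>m k + E \<in> carrier_mat k k" using E by auto
  ultimately have "det (1\<^sub>m k - E) * det (1\<^sub>m k + E) = 1"
    using det_mult[OF c1] by auto
  then show ?thesis by auto
qed

lemma main_abstract:
  fixes Jk :: "'a::{field,finite} mat"
  assumes Jk: "Jk \<in> carrier_mat k k" and Q: "Q \<in> carrier_mat k k" and R: "R \<in> carrier_mat k k"
    and QR: "(Jk - 1\<^sub>m k) * Q + R * (Jk - 1\<^sub>m k) = 1\<^sub>m k"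
  shows "centralizer (k + m) (four_block_mat Jk (0\<^sub>m k m) (0\<^sub>m m k) (1\<^sub>m m)) =
    {four_block_mat A B C D | A B C D.
       A \<in> centralizer k Jk \<and> D \<in> GL m \<and>
       B \<in> carrier_mat k m \<and> C \<in> carrier_mat m k \<and>
       Jk * B = B \<and> C * Jk = C}" (is "?L = ?R")
proof
  define J where "J = four_block_mat Jk (0\<^sub>m k m) (0\<^sub>m m k) (1\<^sub>m m)"
  have J: "J \<in> carrier_mat (k+m) (k+m)" unfolding J_def using Jk by auto
  note kcb = key_CB[OF Jk Q R QR]
  show "?L \<subseteq> ?R"
  proof
    fix X assume "X \<in> ?L"
    then have X: "X \<in> carrier_mat (k+m) (k+m)" and dX: "det X \<noteq> 0" and XJ: "X * J = J * X"
      unfolding centralizer_def GL_det J_def by auto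
    obtain A B C D where sp: "split_block X k k = (A,B,C,D)" by (cases "split_block X k k") auto
    note spl = split_block[OF sp, of m m]
    have A: "A \<in> carrier_mat k k" and B: "B \<in> carrier_mat k m" and C: "C \<in> carrier_mat m k"
      and D: "D \<in> carrier_mat m m" and Xe: "X = four_block_mat A B C D" using spl X by auto
    from XJ[unfolded Xe J_def, unfolded commute_block[OF Jk A B C D]]
    have AJ: "A * Jk = Jk * A" and JB: "Jk * B = B" and CJ: "C * Jk = C" by auto
    obtain Y where Y: "Y \<in> carrier_mat (k+m) (k+m)" and XY: "X * Y = 1\<^sub>m (k+m)"
      and YX: "Y * X = 1\<^sub>m (k+m)" using unit_inv[OF X dX] by blast
    have "Y * J = (Y * J) * (X * Y)" using XY Y J by simp
    also have "\<dots> = Y * (J * X) * Y"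
      using assoc_mult_mat[OF Y J mult_carrier_mat[OF X Y]] assoc_mult_mat[OF J X Y]
        assoc_mult_mat[OF Y mult_carrier_mat[OF J X] Y] by simp
    also have "\<dots> = (Y * X) * (J * Y)" unfolding XJ[symmetric]
      using assoc_mult_mat[OF Y X mult_carrier_mat[OF J Y]] assoc_mult_mat[OF X J Y]
        assoc_mult_mat[OF Y mult_carrier_mat[OF X J] Y] by simp
    also have "\<dots> = J * Y" using YX Y J by simp
    finally have YJ: "Y * J = J * Y" .
    obtain A' B' C' D' where sp': "split_block Y k k = (A',B',C',D')" by (cases "split_block Y k k") auto
    note spl' = split_block[OF sp', of m m]
    have A': "A' \<in> carrier_mat k k" and B': "B' \<in> carrier_mat k m" and C': "C' \<in> carrier_mat m k"
      and D': "D' \<in> carrier_mat m m" and Ye: "Y = four_block_mat A' B' C' D'" using spl' Y by auto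
    from YJ[unfolded Ye J_def, unfolded commute_block[OF Jk A' B' C' D']]
    have JB': "Jk * B' = B'" and CJ': "C' * Jk = C'" by auto
    have "four_block_mat (A * A' + B * C') (A * B' + B * D') (C * A' + D * C') (C * B' + D * D')
      = four_block_mat (1\<^sub>m k) (0\<^sub>m k m) (0\<^sub>m m k) (1\<^sub>m m)"
      using XY unfolding Xe Ye
      by (subst (asm) mult_four_block_mat[OF A B C D A' B' C' D'], simp)
    from four_block_eq[of _ k k _ _ m _ _ m, OF _ _ _ _ _ _ _ _ this] A B C D A' B' C' D'
    have e1: "A * A' + B * C' = 1\<^sub>m k" and e2: "C * B' + D * D' = 1\<^sub>m m" by auto
    have CB': "C * B' = 0\<^sub>m m m" by (rule kcb[OF C B' CJ JB'])
    have C'B: "C' * B = 0\<^sub>m m m" by (rule kcb[OF C' B CJ' JB])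
    have "D * D' = 1\<^sub>m m" using e2 unfolding CB' using D D' by simp
    then have "det D * det D' = 1" using det_mult[OF D D'] by simp
    then have dD: "det D \<noteq> 0" by auto
    define E where "E = B * C'"
    have E: "E \<in> carrier_mat k k" unfolding E_def using B C' by auto
    have "E * E = B * (C' * B) * C'" unfolding E_def
      using assoc_mult_mat[OF B C' mult_carrier_mat[OF B C']] assoc_mult_mat[OF C' B C']
        assoc_mult_mat[OF B mult_carrier_mat[OF C' B] C'] by simp
    also have "\<dots> = 0\<^sub>m k k" unfolding C'B using B C' by simp
    finally have EE: "E * E = 0\<^sub>m k k" .
    have AA': "A * A' = 1\<^sub>m k - E"
    proof (rule eq_matI)
      fix i j assume ij: "i < dim_row (1\<^sub>m k - E)" "j < dim_col (1\<^sub>m k - E)"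
      have "(A * A' + E) $$ (i,j) = 1\<^sub>m k $$ (i,j)" using e1 unfolding E_def by simp
      then show "(A * A') $$ (i,j) = (1\<^sub>m k - E) $$ (i,j)" using ij A A' E
        by (simp add: algebra_simps)
    qed (use A A' E in auto)
    have "det A * det A' = det (1\<^sub>m k - E)" using det_mult[OF A A'] AA' by simp
    then have dA: "det A \<noteq> 0" using one_minus_nil[OF E EE] by auto
    show "X \<in> ?R" unfolding Xe
      using A B C D dA dD AJ JB CJ unfolding centralizer_def GL_det by blast
  qed
  show "?R \<subseteq> ?L"
  proof
    fix X assume "X \<in> ?R"
    then obtain A B C D where Xe: "X = four_block_mat A B C D" and A: "A \<in> carrier_mat k k"
      and dA: "det A \<noteq> 0" and AJ: "A * Jk = Jk * A" and D: "D \<in> carrier_mat m m"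
      and dD: "det D \<noteq> 0" and B: "B \<in> carrier_mat k m" and C: "C \<in> carrier_mat m k"
      and JB: "Jk * B = B" and CJ: "C * Jk = C"
      unfolding centralizer_def GL_det by blast
    obtain A' where A': "A' \<in> carrier_mat k k" and AA': "A * A' = 1\<^sub>m k" and A'A: "A' * A = 1\<^sub>m k"
      using unit_inv[OF A dA] by blast
    have "A' * Jk = A' * Jk * (A * A')" using AA' A' Jk by simp
    also have "\<dots> = A' * (Jk * A) * A'"
      using assoc_mult_mat[OF A' Jk mult_carrier_mat[OF A A']] assoc_mult_mat[OF Jk A A']
        assoc_mult_mat[OF A' mult_carrier_mat[OF Jk A] A'] by simp
    also have "\<dots> = (A' * A) * (Jk * A')" unfolding AJ[symmetric]
      using assoc_mult_mat[OF A' A mult_carrier_mat[OF Jk A']] assoc_mult_mat[OF A Jk A']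
        assoc_mult_mat[OF A' mult_carrier_mat[OF A Jk] A'] by simp
    also have "\<dots> = Jk * A'" using A'A A' Jk by simp
    finally have A'J: "A' * Jk = Jk * A'" .
    have CA': "C * A' \<in> carrier_mat m k" using C A' by auto
    have "(C * A') * Jk = C * (A' * Jk)" using C A' Jk by simp
    also have "\<dots> = (C * Jk) * A'" unfolding A'J using C A' Jk by simp
    finally have CAJ: "(C * A') * Jk = C * A'" unfolding CJ .
    have CAB: "C * A' * B = 0\<^sub>m m m" by (rule kcb[OF CA' B CAJ JB])
    have LU: "four_block_mat (1\<^sub>m k) (0\<^sub>m k m) (C * A') (1\<^sub>m m) * four_block_mat A B (0\<^sub>m m k) D
       = four_block_mat A B C D"
    proof -
      have "four_block_mat (1\<^sub>m k) (0\<^sub>m k m) (C * A') (1\<^sub>m m) * four_block_mat A B (0\<^sub>m m k) D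
        = four_block_mat (1\<^sub>m k * A + 0\<^sub>m k m * 0\<^sub>m m k) (1\<^sub>m k * B + 0\<^sub>m k m * D)
            (C * A' * A + 1\<^sub>m m * 0\<^sub>m m k) (C * A' * B + 1\<^sub>m m * D)"
        by (rule mult_four_block_mat[OF _ _ CA' _ A B _ D], auto)
      also have "\<dots> = four_block_mat A B C D"
        unfolding CAB using A B C D A' A'A by simp
      finally show ?thesis .
    qed
    have X: "X \<in> carrier_mat (k+m) (k+m)" unfolding Xe using A D by auto
    have "det X = det (four_block_mat (1\<^sub>m k) (0\<^sub>m k m) (C * A') (1\<^sub>m m)) * det (four_block_mat A B (0\<^sub>m m k) D)"
      unfolding Xe LU[symmetric]
      by (rule det_mult[of _ "k+m"], insert A B D CA', auto)
    also have "\<dots> = det A * det D"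
      using det_four_block_mat_upper_right_zero[of "1\<^sub>m k" k "0\<^sub>m k m" m "C * A'" "1\<^sub>m m"]
        det_four_block_mat_lower_left_zero[OF A B refl D] CA' by simp
    finally have dX: "det X \<noteq> 0" using dA dD by simp
    have "X * J = J * X" unfolding Xe J_def commute_block[OF Jk A B C D] using AJ JB CJ by simp
    then show "X \<in> ?L" using X dX unfolding centralizer_def GL_det J_def by auto
  qed
qed

definition goodM :: "'a::field mat \<Rightarrow> bool" where
  "goodM M \<longleftrightarrow> (\<exists>d. M \<in> carrier_mat d d \<and>
     (\<exists>Q\<in>carrier_mat d d. \<exists>R\<in>carrier_mat d d. (M - 1\<^sub>m d) * Q + R * (M - 1\<^sub>m d) = 1\<^sub>m d))"

lemma goodM_fb:
  fixes M1 :: "'a::field mat"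
  assumes g1: "goodM M1" and g2: "goodM M2"
  shows "goodM (four_block_mat M1 (0\<^sub>m (dim_row M1) (dim_col M2)) (0\<^sub>m (dim_row M2) (dim_col M1)) M2)"
proof -
  obtain d1 Q1 R1 where M1: "M1 \<in> carrier_mat d1 d1" and Q1: "Q1 \<in> carrier_mat d1 d1"
    and R1: "R1 \<in> carrier_mat d1 d1" and e1: "(M1 - 1\<^sub>m d1) * Q1 + R1 * (M1 - 1\<^sub>m d1) = 1\<^sub>m d1"
    using g1 unfolding goodM_def by blast
  obtain d2 Q2 R2 where M2: "M2 \<in> carrier_mat d2 d2" and Q2: "Q2 \<in> carrier_mat d2 d2"
    and R2: "R2 \<in> carrier_mat d2 d2" and e2: "(M2 - 1\<^sub>m d2) * Q2 + R2 * (M2 - 1\<^sub>m d2) = 1\<^sub>m d2"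
    using g2 unfolding goodM_def by blast
  define M where "M = four_block_mat M1 (0\<^sub>m d1 d2) (0\<^sub>m d2 d1) M2"
  have Mc: "M \<in> carrier_mat (d1+d2) (d1+d2)" unfolding M_def using M1 M2 by auto
  have N1: "M1 - 1\<^sub>m d1 \<in> carrier_mat d1 d1" using M1 by auto
  have N2: "M2 - 1\<^sub>m d2 \<in> carrier_mat d2 d2" using M2 by auto
  have MN: "M - 1\<^sub>m (d1+d2) = four_block_mat (M1 - 1\<^sub>m d1) (0\<^sub>m d1 d2) (0\<^sub>m d2 d1) (M2 - 1\<^sub>m d2)"
    unfolding M_def using M1 M2 by (intro eq_matI, auto)
  define Q where "Q = four_block_mat Q1 (0\<^sub>m d1 d2) (0\<^sub>m d2 d1) Q2"
  define R where "R = four_block_mat R1 (0\<^sub>m d1 d2) (0\<^sub>m d2 d1) R2"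
  have "(M - 1\<^sub>m (d1+d2)) * Q = four_block_mat ((M1 - 1\<^sub>m d1) * Q1) (0\<^sub>m d1 d2) (0\<^sub>m d2 d1) ((M2 - 1\<^sub>m d2) * Q2)"
    unfolding MN Q_def
    by (subst mult_four_block_mat[OF N1 _ _ N2 Q1 _ _ Q2], insert N1 N2 Q1 Q2, auto)
  moreover have "R * (M - 1\<^sub>m (d1+d2)) = four_block_mat (R1 * (M1 - 1\<^sub>m d1)) (0\<^sub>m d1 d2) (0\<^sub>m d2 d1) (R2 * (M2 - 1\<^sub>m d2))"
    unfolding MN R_def
    by (subst mult_four_block_mat[OF R1 _ _ R2 N1 _ _ N2], insert N1 N2 R1 R2, auto)
  ultimately have "(M - 1\<^sub>m (d1+d2)) * Q + R * (M - 1\<^sub>m (d1+d2)) = 1\<^sub>m (d1+d2)"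
    using e1 e2 N1 N2 Q1 Q2 R1 R2
    by (simp add: add_four_block_mat[of _ d1 d1 _ d2 _ d2])
  moreover have "Q \<in> carrier_mat (d1+d2) (d1+d2)" "R \<in> carrier_mat (d1+d2) (d1+d2)"
    unfolding Q_def R_def using Q1 Q2 R1 R2 by auto
  moreover have dims: "dim_row M1 = d1" "dim_col M1 = d1" "dim_row M2 = d2" "dim_col M2 = d2"
    using M1 M2 by auto
  ultimately show ?thesis unfolding goodM_def dims M_def[symmetric] using Mc by blast
qed

lemma goodM_diag:
  fixes Ms :: "'a::field mat list"
  shows "(\<And>M. M \<in> set Ms \<Longrightarrow> goodM M) \<Longrightarrow> goodM (diag_block_mat Ms)"
proof (induct Ms)
  case Nil
  have "(0\<^sub>m 0 0 - 1\<^sub>m 0) * 0\<^sub>m 0 0 + 0\<^sub>m 0 0 * (0\<^sub>m 0 0 - 1\<^sub>m 0) = (1\<^sub>m 0 :: 'a mat)"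
    by (intro eq_matI, auto)
  then show ?case unfolding goodM_def by (auto intro!: exI[of _ 0] bexI[of _ "0\<^sub>m 0 0"])
next
  case (Cons M Ms)
  then show ?case by (simp add: Let_def goodM_fb)
qed

lemma jblock_tm1:
  "jblock (tm1::'a::{field,finite} poly) m - 1\<^sub>m m = mat m m (\<lambda>(i,j). if j = i + 1 then 1 else 0)"
  by (intro eq_matI, auto simp: jblock_def companion_def Let_def)

lemma goodM_unip:
  assumes m: "m \<ge> 2"
  shows "goodM (jblock (tm1::'a::{field,finite} poly) m)"
proof -
  define N :: "'a mat" where "N = mat m m (\<lambda>(i,j). if j = i + 1 then 1 else 0)"
  define Q :: "'a mat" where "Q = mat m m (\<lambda>(i,j). if i = j + 1 then 1 else 0)"
  define R :: "'a mat" where "R = mat m m (\<lambda>(i,j). if i = m - 1 \<and> j = m - 2 then 1 else 0)"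
  have jc: "jblock (tm1::'a poly) m \<in> carrier_mat m m" by (simp add: jblock_def Let_def)
  have NQR: "N * Q + R * N = 1\<^sub>m m"
  proof (rule eq_matI)
    fix i j assume "i < dim_row (1\<^sub>m m :: 'a mat)" "j < dim_col (1\<^sub>m m :: 'a mat)"
    then have ij: "i < m" "j < m" by auto
    have s1: "(N * Q) $$ (i,j) = (\<Sum>l<m. (if l = i + 1 then 1 else 0) * (if l = j + 1 then 1 else 0))"
      using ij unfolding N_def Q_def by (simp add: scalar_prod_def lessThan_atLeast0)
    have s1': "(\<Sum>l<m. (if l = i + 1 then 1 else 0) * (if l = j + 1 then 1 else (0::'a))) = (if i = j \<and> i + 1 < m then 1 else 0)"
      by (simp add: if_distrib[of "\<lambda>x. x * _"] sum.delta' cong: if_cong)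
    have s2: "(R * N) $$ (i,j) = (\<Sum>l<m. (if i = m - 1 \<and> l = m - 2 then 1 else 0) * (if j = l + 1 then 1 else 0))"
      using ij unfolding N_def R_def by (simp add: scalar_prod_def lessThan_atLeast0)
    have s2': "(\<Sum>l<m. (if i = m - 1 \<and> l = m - 2 then 1 else 0) * (if j = l + 1 then 1 else (0::'a))) = (if i = m - 1 \<and> j = m - 1 then 1 else 0)"
      using m by (auto simp: if_distrib[of "\<lambda>x. x * _"] sum.delta' cong: if_cong)
    show "(N * Q + R * N) $$ (i,j) = 1\<^sub>m m $$ (i,j)"
      using ij s1 s1' s2 s2' unfolding N_def Q_def R_def by auto
  qed (auto simp: N_def R_def Q_def)
  have QR: "Q \<in> carrier_mat m m" "R \<in> carrier_mat m m" unfolding Q_def R_def by auto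
  have "(jblock tm1 m - 1\<^sub>m m) * Q + R * (jblock tm1 m - 1\<^sub>m m) = 1\<^sub>m m"
    unfolding jblock_tm1 N_def[symmetric] by (rule NQR)
  then show ?thesis unfolding goodM_def using jc QR by blast
qed

lemma phi_deg:
  fixes f :: "'a::{field,finite} poly"
  assumes "f \<in> Phi" shows "degree f \<ge> 1"
proof -
  have irr: "irreducible f" using assms unfolding Phi_def by auto
  then have "f \<noteq> 0" "\<not> is_unit f" by (auto simp: irreducible_def)
  then show ?thesis using is_unit_iff_degree by fastforce
qed

lemma phi_poly1:
  fixes f :: "'a::{field,finite} poly"
  assumes f: "f \<in> Phi" and ne: "f \<noteq> tm1" shows "poly f 1 \<noteq> 0"
proof
  assume "poly f 1 = 0"
  then have "[:-1, 1:] dvd f" using poly_eq_0_iff_dvd by blast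
  then obtain g where fg: "f = tm1 * g" by (auto elim: dvdE)
  have irr: "irreducible f" and lc: "lead_coeff f = 1" using f unfolding Phi_def by auto
  have "\<not> is_unit (tm1 :: 'a poly)" by (simp add: is_unit_iff_degree)
  then have "is_unit g" using irr fg irreducibleD by blast
  then have dg: "degree g = 0" by (metis is_unit_iff_degree not_is_unit_0)
  have l1: "lead_coeff (tm1::'a poly) = 1" by simp
  have "lead_coeff f = lead_coeff g" by (simp only: fg lead_coeff_mult l1 mult_1)
  then have "lead_coeff g = 1" using lc by simp
  then have "coeff g 0 = 1" using dg by simp
  then have "g = 1" using degree_0_id[OF dg] by (metis one_pCons)
  then show False using fg ne by simp
qed

lemma comp_carrier: "companion f \<in> carrier_mat (degree f) (degree f)"
  by (simp add: companion_def Let_def)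

lemma comp_det:
  fixes f :: "'a::{field,finite} poly"
  assumes f: "f \<in> Phi" and ne: "f \<noteq> tm1"
  shows "det (companion f - 1\<^sub>m (degree f)) \<noteq> 0"
proof
  define d where "d = degree f"
  have d1: "d \<ge> 1" unfolding d_def using phi_deg[OF f] .
  define M where "M = companion f - 1\<^sub>m d"
  have Mc: "M \<in> carrier_mat d d" unfolding M_def d_def using comp_carrier by auto
  have Me: "\<And>i j. i < d \<Longrightarrow> j < d \<Longrightarrow> M $$ (i,j) =
     (if i + 1 = d then - coeff f j else if j = i + 1 then 1 else 0) - (if i = j then 1 else 0)"
    unfolding M_def companion_def d_def Let_def by simp
  assume "det (companion f - 1\<^sub>m (degree f)) = 0"
  then obtain v where v: "v \<in> carrier_vec d" and v0: "v \<noteq> 0\<^sub>v d" and Mv: "M *\<^sub>v v = 0\<^sub>v d"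
    using det_0_iff_vec_prod_zero_field[OF Mc] unfolding M_def d_def by auto
  have rows: "(\<Sum>j<d. M $$ (i,j) * v $ j) = 0" if i: "i < d" for i
  proof -
    have "(M *\<^sub>v v) $ i = 0" using Mv i by simp
    then show ?thesis using i Mc v by (simp add: mult_mat_vec_def scalar_prod_def lessThan_atLeast0)
  qed
  have shift: "v $ (i+1) = v $ i" if i: "i + 1 < d" for i
  proof -
    have "(\<Sum>j<d. M $$ (i,j) * v $ j) = (\<Sum>j<d. (if j = i + 1 then v $ j else 0) - (if j = i then v $ j else 0))"
      using i by (intro sum.cong, auto simp: Me)
    also have "\<dots> = v $ (i+1) - v $ i" using i by (simp add: sum_subtractf sum.delta')
    finally show ?thesis using rows[of i] i by simp
  qed
  have const: "i < d \<Longrightarrow> v $ i = v $ 0" for i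
  proof (induct i)
    case (Suc i)
    have i1: "i + 1 < d" using Suc.prems by linarith
    have i2: "i < d" using Suc.prems by linarith
    have "v $ (i+1) = v $ i" using i1 by (rule shift)
    moreover have "v $ i = v $ 0" using i2 by (rule Suc.hyps)
    ultimately show ?case unfolding Suc_eq_plus1 by (rule trans)
  qed simp
  define c where "c = v $ 0"
  have constc: "\<And>i. i < d \<Longrightarrow> v $ i = c" unfolding c_def using const by blast
  have "(\<Sum>j<d. M $$ (d-1,j) * v $ j) = (\<Sum>j<d. - coeff f j * c - (if j = d - 1 then c else 0))"
    using d1 constc by (intro sum.cong, auto simp: Me algebra_simps)
  also have "\<dots> = - (c * (\<Sum>j<d. coeff f j)) - c"
    using d1 by (simp add: sum_subtractf sum.delta' sum_distrib_left algebra_simps sum_negf)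
  finally have h: "(\<Sum>j<d. M $$ (d-1,j) * v $ j) = - (c * (\<Sum>j<d. coeff f j)) - c" .
  have h2: "- (c * (\<Sum>j<d. coeff f j)) - c = 0" using rows[of "d-1"] d1 h by simp
  have "c * ((\<Sum>j<d. coeff f j) + 1) = - (- (c * (\<Sum>j<d. coeff f j)) - c)"
    by (simp add: algebra_simps)
  then have "c * ((\<Sum>j<d. coeff f j) + 1) = 0" using h2 by simp
  moreover have "poly f 1 = (\<Sum>j<d. coeff f j) + 1"
  proof -
    have "poly f 1 = (\<Sum>j\<le>d. coeff f j)" unfolding d_def by (simp add: poly_altdef)
    also have "\<dots> = (\<Sum>j<d. coeff f j) + coeff f d" by (simp add: lessThan_Suc_atMost[symmetric])
    also have "coeff f d = 1" using f unfolding Phi_def d_def by auto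
    finally show ?thesis .
  qed
  ultimately have "c = 0" using phi_poly1[OF f ne] by simp
  then have "v = 0\<^sub>v d" using constc v by (intro eq_vecI, auto)
  with v0 show False by simp
qed

lemma jblock_carrier: "jblock f p \<in> carrier_mat (degree f * p) (degree f * p)"
  by (simp add: jblock_def Let_def)

lemma jblock_Suc:
  fixes f :: "'a::{field,finite} poly"
  assumes d: "degree f > 0"
  shows "jblock f (Suc p) = four_block_mat (companion f)
     (mat (degree f) (degree f * p) (\<lambda>(i,j). if i = j then 1 else 0))
     (0\<^sub>m (degree f * p) (degree f)) (jblock f p)"
proof -
  let ?d = "degree f"
  show ?thesis
  proof (rule eq_matI)
    fix i j assume i: "i < dim_row (four_block_mat (companion f)
     (mat (degree f) (degree f * p) (\<lambda>(i,j). if i = j then 1 else 0))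
     (0\<^sub>m (degree f * p) (degree f)) (jblock f p))"
      and j: "j < dim_col (four_block_mat (companion f)
     (mat (degree f) (degree f * p) (\<lambda>(i,j). if i = j then 1 else 0))
     (0\<^sub>m (degree f * p) (degree f)) (jblock f p))"
    have i': "i < ?d * Suc p" and j': "j < ?d * Suc p" using i j comp_carrier[of f] jblock_carrier[of f p]
      by auto
    have cd: "companion f $$ (a, b) = companion f $$ (a mod ?d, b mod ?d)" if "a < ?d" "b < ?d" for a b
      using that by simp
    show "jblock f (Suc p) $$ (i, j) = four_block_mat (companion f)
     (mat (degree f) (degree f * p) (\<lambda>(i,j). if i = j then 1 else 0))
     (0\<^sub>m (degree f * p) (degree f)) (jblock f p) $$ (i, j)"
    proof (cases "i < ?d")
      case True
      note iT = this
      show ?thesis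
      proof (cases "j < ?d")
        case True
        then show ?thesis using iT i' j' comp_carrier[of f] jblock_carrier[of f p]
          by (simp add: jblock_def Let_def)
      next
        case False
        then obtain j0 where j0: "j = j0 + ?d" by (metis le_add_diff_inverse2 not_less)
        have "j0 < ?d * p" using j' j0 by simp
        moreover have "(j0 + ?d) div ?d = j0 div ?d + 1" "(j0 + ?d) mod ?d = j0 mod ?d" using d by auto
        moreover have "i div ?d = 0" "i mod ?d = i" using iT by auto
        moreover have "j0 div ?d = 0 \<Longrightarrow> j0 mod ?d = j0" using d by (metis add_0 div_mult_mod_eq mult_0)
        ultimately show ?thesis using iT i' j' j0 comp_carrier[of f] jblock_carrier[of f p] d
          by (auto simp: jblock_def Let_def)
      qed
    next
      case False
      then obtain i0 where i0: "i = i0 + ?d" by (metis le_add_diff_inverse2 not_less)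
      have i0': "i0 < ?d * p" using i' i0 by simp
      have di: "(i0 + ?d) div ?d = i0 div ?d + 1" "(i0 + ?d) mod ?d = i0 mod ?d" using d by auto
      show ?thesis
      proof (cases "j < ?d")
        case True
        then have "j div ?d = 0" by simp
        then show ?thesis using True i' j' i0 i0' di comp_carrier[of f] jblock_carrier[of f p] d
          by (auto simp: jblock_def Let_def)
      next
        case False
        then obtain j0 where j0: "j = j0 + ?d" by (metis le_add_diff_inverse2 not_less)
        have "j0 < ?d * p" using j' j0 by simp
        moreover have "(j0 + ?d) div ?d = j0 div ?d + 1" "(j0 + ?d) mod ?d = j0 mod ?d" using d by auto
        ultimately show ?thesis using False i' j' i0 i0' di j0 comp_carrier[of f] jblock_carrier[of f p] d
          by (auto simp: jblock_def Let_def)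
      qed
    qed
  qed (use comp_carrier[of f] jblock_carrier[of f p] jblock_carrier[of f "Suc p"] in auto)
qed

lemma jblock_det:
  fixes f :: "'a::{field,finite} poly"
  assumes f: "f \<in> Phi" and ne: "f \<noteq> tm1"
  shows "det (jblock f p - 1\<^sub>m (degree f * p)) \<noteq> 0"
proof (induct p)
  case 0
  have "jblock f 0 - 1\<^sub>m (degree f * 0) = 1\<^sub>m 0"
    using jblock_carrier[of f 0] by (intro eq_matI, auto)
  then show ?case by simp
next
  case (Suc p)
  let ?d = "degree f"
  have d: "?d > 0" using phi_deg[OF f] by simp
  let ?E = "mat (degree f) (degree f * p) (\<lambda>(i,j). if i = j then 1 else (0::'a))"
  have "jblock f (Suc p) - 1\<^sub>m (?d * Suc p) = four_block_mat (companion f - 1\<^sub>m ?d) ?E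
     (0\<^sub>m (?d * p) ?d) (jblock f p - 1\<^sub>m (?d * p))"
    unfolding jblock_Suc[OF d] using comp_carrier[of f] jblock_carrier[of f p]
    by (intro eq_matI, auto)
  moreover have "det (four_block_mat (companion f - 1\<^sub>m ?d) ?E
     (0\<^sub>m (?d * p) ?d) (jblock f p - 1\<^sub>m (?d * p))) = det (companion f - 1\<^sub>m ?d) * det (jblock f p - 1\<^sub>m (?d * p))"
    by (rule det_four_block_mat_lower_left_zero, insert comp_carrier[of f] jblock_carrier[of f p], auto)
  ultimately show ?case using Suc comp_det[OF f ne] by simp
qed

lemma goodM_inv:
  fixes f :: "'a::{field,finite} poly"
  assumes f: "f \<in> Phi" and ne: "f \<noteq> tm1"
  shows "goodM (jblock f p)"
proof -
  let ?n = "degree f * p"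
  have Nc: "jblock f p - 1\<^sub>m ?n \<in> carrier_mat ?n ?n" using jblock_carrier[of f p] by auto
  obtain Q where Q: "Q \<in> carrier_mat ?n ?n" and NQ: "(jblock f p - 1\<^sub>m ?n) * Q = 1\<^sub>m ?n"
    using unit_inv[OF Nc jblock_det[OF f ne]] by blast
  have "(jblock f p - 1\<^sub>m ?n) * Q + 0\<^sub>m ?n ?n * (jblock f p - 1\<^sub>m ?n) = 1\<^sub>m ?n"
    using NQ Nc by simp
  then show ?thesis unfolding goodM_def using jblock_carrier[of f p] Q
    by (intro exI[of _ ?n] conjI bexI[of _ Q] bexI[of _ "0\<^sub>m ?n ?n"], auto)
qed

lemma nl_props:
  fixes mu :: "'a::{field,finite} poly \<Rightarrow> nat list"
  assumes mu: "mu \<in> PPhi"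
  shows "distinct (nonunip_list mu) \<and> set (nonunip_list mu) = supp mu - {tm1}"
proof -
  have "finite (supp mu - {tm1})" using mu unfolding PPhi_def by auto
  then obtain xs where "distinct xs \<and> set xs = supp mu - {tm1}"
    using finite_distinct_list by metis
  then show ?thesis unfolding nonunip_list_def by (rule someI)
qed

lemma nl_up: "nonunip_list (up j mu) = nonunip_list mu"
proof -
  have "supp (up j mu) - {tm1} = supp mu - {tm1}" unfolding supp_def up_def by auto
  then show ?thesis unfolding nonunip_list_def by simp
qed

lemma sort_rep:
  "rev (sort (map Suc xs @ replicate r (1::nat))) = rev (sort (map Suc xs)) @ replicate r 1"
proof -
  have "sort (map Suc xs @ replicate r (1::nat)) = replicate r 1 @ sort (map Suc xs)"
    by (rule properties_for_sort, auto simp: sorted_append)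
  then show ?thesis by simp
qed

lemma diag_rep: "diag_block_mat (replicate r (jblock (tm1::'a::{field,finite} poly) 1)) = 1\<^sub>m r"
proof -
  have j1: "jblock (tm1::'a poly) 1 = 1\<^sub>m 1"
    by (intro eq_matI, auto simp: jblock_def companion_def Let_def)
  show ?thesis unfolding j1
  proof (induct r)
    case (Suc r)
    then show ?case using four_block_one_mat[of 1 r] by (simp add: Let_def)
  qed (intro eq_matI, auto)
qed

definition Pl :: "('a::{field,finite} poly \<Rightarrow> nat list) \<Rightarrow> 'a mat list" where
  "Pl mu = concat (map (\<lambda>f. map (jblock f) (mu f)) (nonunip_list mu))"

definition Ul :: "('a::{field,finite} poly \<Rightarrow> nat list) \<Rightarrow> 'a mat list" where
  "Ul mu = map (jblock tm1) (rev (sort (map Suc (mu tm1))))"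

lemma Jmat_up_eq:
  fixes mu :: "'a::{field,finite} poly \<Rightarrow> nat list"
  assumes mu: "mu \<in> PPhi" and k: "k = pnorm mu + length (mu tm1)"
  shows "Jmat (up j mu) = diag_block_mat ((Pl mu @ Ul mu) @ replicate (j - k) (jblock tm1 1))"
proof -
  have 1: "concat (map (\<lambda>f. map (jblock f) (up j mu f)) (nonunip_list (up j mu))) = Pl mu"
    unfolding Pl_def nl_up
  proof -
    have "map (\<lambda>f. map (jblock f) (up j mu f)) (nonunip_list mu) = map (\<lambda>f. map (jblock f) (mu f)) (nonunip_list mu)"
    proof (rule map_cong[OF refl])
      fix f assume "f \<in> set (nonunip_list mu)"
      then have "f \<noteq> tm1" using nl_props[OF mu] by auto
      then show "map (jblock f) (up j mu f) = map (jblock f) (mu f)" unfolding up_def by simp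
    qed
    then show "concat (map (\<lambda>f. map (jblock f) (up j mu f)) (nonunip_list mu)) = concat (map (\<lambda>f. map (jblock f) (mu f)) (nonunip_list mu))"
      by (rule arg_cong[where f=concat])
  qed
  have 2: "up j mu tm1 = map Suc (mu tm1) @ replicate (j - k) 1"
    unfolding up_def k by (simp add: diff_diff_add add.commute)
  show ?thesis unfolding Jmat_def 1 2 sort_rep Ul_def by simp
qed

lemma dim_jblock[simp]: "dim_row (jblock f p) = degree f * p" "dim_col (jblock f p) = degree f * p"
  by (simp_all add: jblock_def Let_def)

lemma sum_jb: "sum_list (map (\<lambda>p. degree f * p) xs) = degree f * sum_list xs"
  by (induct xs) (auto simp: algebra_simps)

lemma sum_P:
  "sum_list (map dim_row (concat (map (\<lambda>f. map (jblock f) (mu f)) L))) =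
   (\<Sum>f\<leftarrow>L. degree f * sum_list (mu f))"
  by (induct L) (auto simp: sum_jb o_def)

lemma sum_mset_eq: "sum_list (rev (sort (xs::nat list))) = sum_list xs"
proof -
  have "sum_list (rev (sort xs)) = sum_mset (mset (rev (sort xs)))" by (rule sum_mset_sum_list[symmetric])
  also have "\<dots> = sum_mset (mset xs)" by (simp only: mset_sort mset_rev)
  also have "\<dots> = sum_list xs" by (rule sum_mset_sum_list)
  finally show ?thesis .
qed

lemma sum_sort_eq: "sum_list (sort (xs::nat list)) = sum_list xs"
proof -
  have "sum_list (sort xs) = sum_mset (mset (sort xs))" by (rule sum_mset_sum_list[symmetric])
  also have "\<dots> = sum_mset (mset xs)" by (simp only: mset_sort)
  also have "\<dots> = sum_list xs" by (rule sum_mset_sum_list)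
  finally show ?thesis .
qed

lemma sum_Suc: "sum_list (map Suc xs) = sum_list xs + length xs"
  by (induct xs) auto

lemma sum_U: "sum_list (map (\<lambda>p. dim_row (jblock (tm1::'a::{field,finite} poly) p)) xs) = sum_list xs"
  by (induct xs) auto

lemma pnorm_split:
  fixes mu :: "'a::{field,finite} poly \<Rightarrow> nat list"
  assumes mu: "mu \<in> PPhi"
  shows "pnorm mu = (\<Sum>f\<in>supp mu - {tm1}. degree f * sum_list (mu f)) + sum_list (mu tm1)"
proof (cases "tm1 \<in> supp mu")
  case True
  have "finite (supp mu)" using mu unfolding PPhi_def by auto
  then show ?thesis unfolding pnorm_def using sum.remove[OF _ True, of "\<lambda>f. degree f * sum_list (mu f)"] by simp
next
  case False
  then have "mu tm1 = []" unfolding supp_def by auto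
  then show ?thesis unfolding pnorm_def using False by simp
qed

lemma setP: "M \<in> set (Pl mu) \<Longrightarrow> \<exists>f \<in> set (nonunip_list mu). \<exists>p \<in> set (mu f). M = jblock f p"
  unfolding Pl_def set_concat set_map image_image by blast

lemma setU: "M \<in> set (Ul mu) \<Longrightarrow> \<exists>p \<in> set (mu tm1). M = jblock tm1 (Suc p)"
  unfolding Ul_def set_map set_rev set_sort image_image by blast

lemma sqPU: "Ball (set (Pl mu @ Ul mu)) square_mat"
proof (rule ballI)
  fix M assume M: "M \<in> set (Pl mu @ Ul mu)"
  have "\<exists>f p. M = jblock f p"
  proof (cases "M \<in> set (Pl mu)")
    case True
    then show ?thesis using setP[OF True] by blast
  next
    case False
    then have "M \<in> set (Ul mu)" using M by simp
    then show ?thesis using setU by blast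
  qed
  then obtain f p where Mf: "M = jblock f p" by blast
  show "square_mat M" unfolding Mf by simp
qed

lemma dimJ:
  fixes mu :: "'a::{field,finite} poly \<Rightarrow> nat list"
  assumes mu: "mu \<in> PPhi" and k: "k = pnorm mu + length (mu tm1)"
  shows "diag_block_mat (Pl mu @ Ul mu) \<in> carrier_mat k k"
proof -
  have sq: "square_mat (diag_block_mat (Pl mu @ Ul mu))"
    by (rule diag_block_mat_square[OF sqPU])
  have "sum_list (map dim_row (Pl mu)) = (\<Sum>f\<leftarrow>nonunip_list mu. degree f * sum_list (mu f))"
    unfolding Pl_def by (rule sum_P)
  also have "\<dots> = (\<Sum>f\<in>supp mu - {tm1}. degree f * sum_list (mu f))"
  proof -
    have d: "distinct (nonunip_list mu)" and st: "set (nonunip_list mu) = supp mu - {tm1}"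
      using nl_props[OF mu] by auto
    show ?thesis by (simp only: sum_list_distinct_conv_sum_set[OF d] st)
  qed
  finally have sP: "sum_list (map dim_row (Pl mu)) = (\<Sum>f\<in>supp mu - {tm1}. degree f * sum_list (mu f))" .
  have "sum_list (map dim_row (Ul mu)) = sum_list (rev (sort (map Suc (mu tm1))))"
    unfolding Ul_def using sum_U[where 'a='a] by (simp add: o_def)
  also have "\<dots> = sum_list (mu tm1) + length (mu tm1)" by (simp only: sum_mset_eq sum_Suc)
  finally have sU: "sum_list (map dim_row (Ul mu)) = sum_list (mu tm1) + length (mu tm1)" .
  have "dim_row (diag_block_mat (Pl mu @ Ul mu)) = sum_list (map dim_row (Pl mu)) + sum_list (map dim_row (Ul mu))"
    by (simp only: dim_diag_block_mat map_append sum_list_append)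
  also have "\<dots> = k" unfolding sP sU k pnorm_split[OF mu] by (simp only: add.assoc)
  finally have dr: "dim_row (diag_block_mat (Pl mu @ Ul mu)) = k" .
  have "dim_col (diag_block_mat (Pl mu @ Ul mu)) = dim_row (diag_block_mat (Pl mu @ Ul mu))"
    using sq by (simp only: square_mat.simps)
  then have dc: "dim_col (diag_block_mat (Pl mu @ Ul mu)) = k" using dr by (rule trans)
  show ?thesis by (rule carrier_matI[OF dr dc])
qed

lemma nz: "p \<in> set xs \<Longrightarrow> (0::nat) \<notin> set xs \<Longrightarrow> p \<noteq> 0"
  by (cases "p = 0") simp_all

lemma goodJ:
  fixes mu :: "'a::{field,finite} poly \<Rightarrow> nat list"
  assumes mu: "mu \<in> PPhi"
  shows "goodM (diag_block_mat (Pl mu @ Ul mu))"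
proof (rule goodM_diag)
  fix M assume "M \<in> set (Pl mu @ Ul mu)"
  then consider (P) "M \<in> set (Pl mu)" | (U) "M \<in> set (Ul mu)" unfolding set_append by blast
  then show "goodM M"
  proof cases
    case P
    then obtain f p where f: "f \<in> set (nonunip_list mu)" and M: "M = jblock f p"
      using setP[of M mu] by blast
    have "f \<in> supp mu" "f \<noteq> tm1" using f nl_props[OF mu] by auto
    then have "f \<in> Phi" using mu unfolding PPhi_def by auto
    then show ?thesis unfolding M using goodM_inv \<open>f \<noteq> tm1\<close> by blast
  next
    case U
    then obtain p where p: "p \<in> set (mu tm1)" and M: "M = jblock tm1 (Suc p)"
      using setU[of M mu] by blast
    have "0 \<notin> set (mu tm1)" using mu unfolding PPhi_def is_partition_def by blast
    then have "p \<noteq> 0" using nz[OF p] by blast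
    then show ?thesis unfolding M by (intro goodM_unip) simp
  qed
qed

theorem proposition2p5:
  fixes mu :: "'a::{field,finite} poly \<Rightarrow> nat list" and n k :: nat
  assumes "mu \<in> PPhi"
    and "k = pnorm mu + length (mu tm1)"
    and "k \<le> n"
  shows "centralizer n (Jmat (up n mu)) =
    {four_block_mat A B C D | A B C D.
       A \<in> centralizer k (Jmat (up k mu)) \<and> D \<in> GL (n - k) \<and>
       B \<in> carrier_mat k (n - k) \<and> C \<in> carrier_mat (n - k) k \<and>
       Jmat (up k mu) * B = B \<and> C * Jmat (up k mu) = C}"
proof -
  note mu = assms(1) and k = assms(2)
  define Jk where "Jk = diag_block_mat (Pl mu @ Ul mu)"
  have Jk: "Jk \<in> carrier_mat k k" unfolding Jk_def by (rule dimJ[OF mu k])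
  have Jke: "Jmat (up k mu) = Jk" unfolding Jmat_up_eq[OF mu k] Jk_def by simp
  have Jne: "Jmat (up n mu) = four_block_mat Jk (0\<^sub>m k (n - k)) (0\<^sub>m (n - k) k) (1\<^sub>m (n - k))"
    unfolding Jmat_up_eq[OF mu k] diag_block_mat_append[of "Pl mu @ Ul mu"] Let_def diag_rep Jk_def[symmetric]
    using Jk by simp
  obtain d Q R where Jd: "Jk \<in> carrier_mat d d" and Q: "Q \<in> carrier_mat d d" and R: "R \<in> carrier_mat d d"
    and QR: "(Jk - 1\<^sub>m d) * Q + R * (Jk - 1\<^sub>m d) = 1\<^sub>m d"
    using goodJ[OF mu, folded Jk_def] unfolding goodM_def by blast
  have "d = k" using Jd Jk by auto
  note ma = main_abstract[OF Jk Q[unfolded this] R[unfolded this] QR[unfolded this], of "n - k"]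
  have nk: "k + (n - k) = n" using assms(3) by simp
  show ?thesis unfolding Jke Jne using ma unfolding nk .
qed

end
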